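(* Let $r\ge4$ and $s\ge1$ be integers and consider the lexicographic product $C_r[K_s]$. If $H$ is a connected induced regular subgraph of $C_r[K_s]$ of degree $d$, then either (i) $H$ is a clique of order $d+1$, with $0\le d\le 2s-1$; or (ii) $r(d+1)/3$ is an integer, $2\le d\le 3s-1$, $H$ has order $r(d+1)/3$, and every vertex of $C_r[K_s]$ is adjacent to some vertex of $H$. Conversely, for every $d$ with $0\le d\le 2s-1$ there is a connected induced regular subgraph of degree $d$ of type (i), and for every $d$ with $2\le d\le 3s-1$ such that $r(d+1)/3$ is an integer there is a connected induced regular subgraph of degree $d$ of type (ii).
   Context: Graphs are finite and simple. $C_r$ is the cycle on $r$ vertices and $K_s$ the complete graph on $s$ vertices. The lexicographic product $G[H]$ has vertex set $V(G)\times V(H)$, with $(a,b)$ adjacent to $(a',b')$ iff $a$ is adjacent to $a'$ in $G$, or $a=a'$ and $b$ is adjacent to $b'$ in $H$. Thus $C_r[K_s]$ consists of $r$ cliques of order $s$ arranged cyclically, with all edges between cyclically consecutive cliques. A regular subgraph of degree $d$ is one in which every vertex has exactly $d$ neighbours in the subgraph. *)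

theory Defs
  imports Main
begin

text \<open>The lexicographic product C_r[K_s]: vertices (i,j) with i < r (position on the
  cycle) and j < s (position inside the clique).\<close>

definition lex_verts :: "nat \<Rightarrow> nat \<Rightarrow> (nat \<times> nat) set" where
  "lex_verts r s = {0..<r} \<times> {0..<s}"

definition lex_adj :: "nat \<Rightarrow> nat \<times> nat \<Rightarrow> nat \<times> nat \<Rightarrow> bool" where
  "lex_adj r x y \<longleftrightarrow>
     (fst y = Suc (fst x) mod r \<or> fst x = Suc (fst y) mod r) \<or>
     (fst x = fst y \<and> snd x \<noteq> snd y)"

definition induced_connected :: "nat \<Rightarrow> (nat \<times> nat) set \<Rightarrow> bool" where
  "induced_connected r S \<longleftrightarrow> S \<noteq> {} \<and>
     (\<forall>x\<in>S. \<forall>y\<in>S. (\<lambda>u v. u \<in> S \<and> v \<in> S \<and> lex_adj r u v)\<^sup>*\<^sup>* x y)"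

definition induced_regular :: "nat \<Rightarrow> (nat \<times> nat) set \<Rightarrow> nat \<Rightarrow> bool" where
  "induced_regular r S d \<longleftrightarrow> (\<forall>x\<in>S. card {y \<in> S. lex_adj r x y} = d)"

definition is_clique :: "nat \<Rightarrow> (nat \<times> nat) set \<Rightarrow> bool" where
  "is_clique r S \<longleftrightarrow> (\<forall>x\<in>S. \<forall>y\<in>S. x \<noteq> y \<longrightarrow> lex_adj r x y)"

definition dominates :: "nat \<Rightarrow> nat \<Rightarrow> (nat \<times> nat) set \<Rightarrow> bool" where
  "dominates r s S \<longleftrightarrow> (\<forall>v\<in>lex_verts r s. \<exists>u\<in>S. lex_adj r v u)"

end

theory Submission
  imports Defs
begin


definition cnt :: "(nat \<times> nat) set \<Rightarrow> nat \<Rightarrow> nat \<Rightarrow> nat" where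
  "cnt S r j = card {y \<in> S. fst y = j mod r}"

lemma cnt_cong: "j mod r = k mod r \<Longrightarrow> cnt S r j = cnt S r k"
  unfolding cnt_def by simp

lemma aux_m: "r > 0 \<Longrightarrow> a mod r = (Suc a mod r + (r - 1)) mod r"
proof -
  assume "r > 0"
  then have "a mod r = (Suc a + (r - 1)) mod r" by simp
  also have "\<dots> = (Suc a mod r + (r - 1)) mod r" by (simp add: mod_add_left_eq)
  finally show ?thesis .
qed

lemma suc_mod_cancel: "(Suc a mod r = Suc b mod r) \<longleftrightarrow> (a mod r = b mod r)"
proof
  assume e: "Suc a mod r = Suc b mod r"
  show "a mod r = b mod r"
  proof (cases "r = 0")
    case False
    then show ?thesis using aux_m[of r a] aux_m[of r b] e by simp
  qed (use e in simp)
next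
  assume "a mod r = b mod r" then show "Suc a mod r = Suc b mod r" by (metis mod_Suc_eq)
qed

lemma mod_ne1: "r \<ge> 2 \<Longrightarrow> j mod r \<noteq> Suc j mod r"
proof
  assume r: "r \<ge> 2" and e: "j mod r = Suc j mod r"
  define m where "m = j mod r"
  have m: "m < r" using r unfolding m_def by simp
  have "Suc m mod r = Suc j mod r" unfolding m_def by (rule mod_Suc_eq)
  then have e2: "m = Suc m mod r" using e unfolding m_def by simp
  show False
  proof (cases "Suc m < r")
    case True then show False using e2 by simp
  next
    case False then have "Suc m = r" using m by simp
    then show False using e2 r by simp
  qed
qed
lemma mod_ne2: "r \<ge> 3 \<Longrightarrow> j mod r \<noteq> Suc (Suc j) mod r"
proof
  assume r: "r \<ge> 3" and e: "j mod r = Suc (Suc j) mod r"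
  define m where "m = j mod r"
  have m: "m < r" using r unfolding m_def by simp
  have "Suc (Suc m) mod r = Suc (Suc j) mod r" unfolding m_def by (rule mod_Suc_Suc_eq)
  then have e2: "m = Suc (Suc m) mod r" using e unfolding m_def by simp
  show False
  proof (cases "Suc (Suc m) < r")
    case True then show False using e2 by simp
  next
    case False then have "Suc (Suc m) = r \<or> Suc m = r" using m by linarith
    then show False
    proof
      assume "Suc (Suc m) = r" then show False using e2 r by simp
    next
      assume h: "Suc m = r"
      then have "Suc (Suc m) = r + 1" by simp
      moreover have "(r + 1) mod r = 1" using r by (simp add: mod_Suc)
      ultimately show False using e2 h r by simp
    qed
  qed
qed

lemma finite_verts: "finite (lex_verts r s)"
  unfolding lex_verts_def by simp

lemma adj_iff:
  assumes y: "fst y < r" and fx: "fst x = Suc j mod r"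
  shows "lex_adj r x y \<longleftrightarrow> (fst y = Suc (Suc j) mod r \<or> fst y = j mod r \<or> (fst y = Suc j mod r \<and> y \<noteq> x))"
proof -
  have a1: "Suc (fst x) mod r = Suc (Suc j) mod r" using fx by (metis mod_Suc_eq)
  have a2: "(fst x = Suc (fst y) mod r) \<longleftrightarrow> fst y = j mod r"
    using fx suc_mod_cancel y by (metis mod_less)
  have a3: "(fst x = fst y \<and> snd x \<noteq> snd y) \<longleftrightarrow> (fst y = Suc j mod r \<and> y \<noteq> x)"
    using fx by (metis prod_eq_iff)
  show ?thesis unfolding lex_adj_def a1 a2 a3 by blast
qed

lemma nbr_card:
  assumes r: "r \<ge> 3" and S: "S \<subseteq> lex_verts r s" and x: "x \<in> S" and fx: "fst x = Suc j mod r"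
  shows "card {y\<in>S. lex_adj r x y} + 1 = cnt S r j + cnt S r (Suc j) + cnt S r (Suc (Suc j))"
proof -
  have fin: "finite S" using S finite_verts finite_subset by blast
  define A where "A = {y \<in> S. fst y = j mod r}"
  define B where "B = {y \<in> S. fst y = Suc j mod r}"
  define C where "C = {y \<in> S. fst y = Suc (Suc j) mod r}"
  have lt: "\<And>y. y \<in> S \<Longrightarrow> fst y < r" using S unfolding lex_verts_def by auto
  have eq: "{y\<in>S. lex_adj r x y} = A \<union> (B - {x}) \<union> C"
    using adj_iff[OF lt fx] unfolding A_def B_def C_def by blast
  have d1: "j mod r \<noteq> Suc j mod r" using mod_ne1 r by simp
  have d2: "j mod r \<noteq> Suc (Suc j) mod r" using mod_ne2 r by simp
  have d3: "Suc j mod r \<noteq> Suc (Suc j) mod r" using mod_ne1[of r "Suc j"] r by simp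
  have fA: "finite A" "finite B" "finite C" using fin unfolding A_def B_def C_def by auto
  have xB: "x \<in> B" using x fx unfolding B_def by simp
  have "card (A \<union> (B - {x}) \<union> C) = card A + card (B - {x}) + card C"
    using fA d1 d2 d3 unfolding A_def B_def C_def
    by (subst card_Un_disjoint; (subst card_Un_disjoint)?) auto
  moreover have "card (B - {x}) + 1 = card B" using xB fA
    by (metis card_Diff1_less card_Suc_Diff1 Suc_eq_plus1)
  ultimately show ?thesis using eq unfolding cnt_def A_def B_def C_def
    by (simp add: mod_Suc_eq)
qed



lemma fin_S: "S \<subseteq> lex_verts r s \<Longrightarrow> finite S"
  using finite_verts finite_subset by blast

lemma cnt_pos: "S \<subseteq> lex_verts r s \<Longrightarrow> z \<in> S \<Longrightarrow> fst z = j mod r \<Longrightarrow> cnt S r j > 0"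
proof -
  assume a: "S \<subseteq> lex_verts r s" "z \<in> S" "fst z = j mod r"
  have "z \<in> {y\<in>S. fst y = j mod r}" using a by simp
  moreover have "finite {y\<in>S. fst y = j mod r}" using fin_S[OF a(1)] by simp
  ultimately show ?thesis unfolding cnt_def using card_gt_0_iff by blast
qed

lemma cnt_posE: "cnt S r j > 0 \<Longrightarrow> \<exists>x\<in>S. fst x = j mod r"
  unfolding cnt_def by (metis (mono_tags, lifting) card.empty empty_Collect_eq less_irrefl)

lemma eqn:
  assumes "r \<ge> 3" "S \<subseteq> lex_verts r s" "induced_regular r S d" "cnt S r (Suc j) > 0"
  shows "cnt S r j + cnt S r (Suc j) + cnt S r (Suc (Suc j)) = d + 1"
proof -
  obtain x where x: "x \<in> S" "fst x = Suc j mod r" using cnt_posE[OF assms(4)] by blast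
  have "card {y\<in>S. lex_adj r x y} = d" using assms(3) x unfolding induced_regular_def by blast
  then show ?thesis using nbr_card[OF assms(1,2) x] by simp
qed

lemma card_sum:
  assumes "r > 0" "S \<subseteq> lex_verts r s"
  shows "card S = (\<Sum>j<r. cnt S r j)"
proof -
  have fin: "finite S" using fin_S assms(2) by blast
  have S: "S = (\<Union>j\<in>{..<r}. {y\<in>S. fst y = j})" using assms(2) unfolding lex_verts_def by auto
  have "card S = (\<Sum>j<r. card {y\<in>S. fst y = j})"
    by (subst S, rule card_UN_disjoint) (use fin in auto)
  also have "\<dots> = (\<Sum>j<r. cnt S r j)" unfolding cnt_def by (rule sum.cong) auto
  finally show ?thesis .
qed

lemma shift_sum: "r > 0 \<Longrightarrow> (\<Sum>j<r. cnt S r (Suc j)) = (\<Sum>j<r. cnt S r j)"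
proof -
  assume r: "r > 0"
  have "(\<Sum>j<Suc r. cnt S r j) = cnt S r 0 + (\<Sum>j<r. cnt S r (Suc j))"
    by (rule sum.lessThan_Suc_shift)
  moreover have "(\<Sum>j<Suc r. cnt S r j) = (\<Sum>j<r. cnt S r j) + cnt S r r" by simp
  moreover have "cnt S r r = cnt S r 0" by (rule cnt_cong) simp
  ultimately show ?thesis by simp
qed

lemma triple:
  assumes "r > 0" "S \<subseteq> lex_verts r s"
    "\<And>j. cnt S r j + cnt S r (Suc j) + cnt S r (Suc (Suc j)) = d + 1"
  shows "3 * card S = r * (d + 1)"
proof -
  have "r * (d + 1) = (\<Sum>j<r. cnt S r j + cnt S r (Suc j) + cnt S r (Suc (Suc j)))"
    using assms(3) by simp
  also have "\<dots> = (\<Sum>j<r. cnt S r j) + (\<Sum>j<r. cnt S r (Suc j)) + (\<Sum>j<r. cnt S r (Suc (Suc j)))"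
    by (simp add: sum.distrib)
  also have "(\<Sum>j<r. cnt S r (Suc (Suc j))) = (\<Sum>j<r. cnt S r (Suc j))"
  proof -
    have "(\<Sum>j<Suc r. cnt S r (Suc j)) = cnt S r 1 + (\<Sum>j<r. cnt S r (Suc (Suc j)))"
      by (subst sum.lessThan_Suc_shift) simp
    moreover have "(\<Sum>j<Suc r. cnt S r (Suc j)) = (\<Sum>j<r. cnt S r (Suc j)) + cnt S r (Suc r)" by simp
    moreover have "cnt S r (Suc r) = cnt S r 1"
    proof (rule cnt_cong)
      have "Suc r = r + 1" by simp
      then show "Suc r mod r = 1 mod r" by (simp only: mod_add_self1)
    qed
    ultimately show ?thesis by simp
  qed
  finally show ?thesis using shift_sum[OF assms(1)] card_sum[OF assms(1,2)] by simp
qed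

lemma cnt_le: "S \<subseteq> lex_verts r s \<Longrightarrow> cnt S r j \<le> s"
proof -
  assume S: "S \<subseteq> lex_verts r s"
  have "{y\<in>S. fst y = j mod r} \<subseteq> {j mod r} \<times> {0..<s}" using S unfolding lex_verts_def by auto
  then have "card {y\<in>S. fst y = j mod r} \<le> card ({j mod r} \<times> {0..<s})" by (rule card_mono[rotated]) simp
  then show ?thesis unfolding cnt_def by simp
qed

lemma rtranclp_sym: "(\<And>u v. R u v \<Longrightarrow> R v u) \<Longrightarrow> R\<^sup>*\<^sup>* x y \<Longrightarrow> R\<^sup>*\<^sup>* y x"
proof -
  assume s: "\<And>u v. R u v \<Longrightarrow> R v u" and h: "R\<^sup>*\<^sup>* x y"
  from h show "R\<^sup>*\<^sup>* y x"
    by (induction rule: rtranclp_induct) (auto intro: converse_rtranclp_into_rtranclp s)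
qed

lemma adj_sym: "lex_adj r u v \<Longrightarrow> lex_adj r v u"
  unfolding lex_adj_def by auto

lemma adj_irrefl: "r \<ge> 2 \<Longrightarrow> fst x < r \<Longrightarrow> \<not> lex_adj r x x"
  unfolding lex_adj_def using mod_ne1[of r "fst x"] by auto

lemma clique_facts:
  assumes r: "r \<ge> 2" and S: "S \<subseteq> lex_verts r s" "S \<noteq> {}" and c: "is_clique r S"
  shows "induced_connected r S \<and> induced_regular r S (card S - 1)"
proof
  show "induced_connected r S" unfolding induced_connected_def
  proof (intro conjI ballI)
    fix x y assume "x \<in> S" "y \<in> S"
    then show "(\<lambda>u v. u \<in> S \<and> v \<in> S \<and> lex_adj r u v)\<^sup>*\<^sup>* x y"
      using c unfolding is_clique_def by (cases "x = y") auto
  qed (use S in auto)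
  show "induced_regular r S (card S - 1)" unfolding induced_regular_def
  proof
    fix x assume x: "x \<in> S"
    have "fst x < r" using x S unfolding lex_verts_def by auto
    then have n: "\<not> lex_adj r x x" using adj_irrefl[OF r] by blast
    have p: "\<And>y. y \<in> S \<Longrightarrow> y \<noteq> x \<Longrightarrow> lex_adj r x y"
      using c[unfolded is_clique_def, rule_format, OF x] by (metis (no_types))
    have "{y\<in>S. lex_adj r x y} = S - {x}" using n p by auto
    then show "card {y\<in>S. lex_adj r x y} = card S - 1" using x fin_S[OF S(1)] by simp
  qed
qed



lemma forward:
  assumes r: "r \<ge> 4" and S: "S \<subseteq> lex_verts r s" and con: "induced_connected r S"
    and reg: "induced_regular r S d"
  shows "(is_clique r S \<and> card S = d + 1 \<and> d + 1 \<le> 2 * s)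
          \<or> (3 dvd r * (d + 1) \<and> 2 \<le> d \<and> d + 1 \<le> 3 * s \<and>
             card S = r * (d + 1) div 3 \<and> dominates r s S)"
proof -
  have r3: "r \<ge> 3" and r0: "r > 0" and r2: "r \<ge> 2" using r by auto
  have fin: "finite S" using fin_S[OF S] .
  have lt: "\<And>y. y \<in> S \<Longrightarrow> fst y < r" using S unfolding lex_verts_def by auto
  have E: "\<And>j. cnt S r (Suc j) > 0 \<Longrightarrow> cnt S r j + cnt S r (Suc j) + cnt S r (Suc (Suc j)) = d + 1"
    using eqn[OF r3 S reg] by blast
  show ?thesis
  proof (cases "\<forall>j. cnt S r j > 0")
    case True
    have T: "\<And>j. cnt S r j + cnt S r (Suc j) + cnt S r (Suc (Suc j)) = d + 1"
      using E True by blast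
    have eq3: "3 * card S = r * (d + 1)" using triple[OF r0 S T] .
    have "3 dvd r * (d + 1)" using eq3 by (metis dvd_triv_left)
    moreover have "card S = r * (d + 1) div 3" using eq3 by simp
    moreover have "2 \<le> d" using T[of 0] True[rule_format, of 0] True[rule_format, of "Suc 0"]
        True[rule_format, of "Suc (Suc 0)"] by simp
    moreover have "d + 1 \<le> 3 * s" using T[of 0] cnt_le[OF S, of 0] cnt_le[OF S, of "Suc 0"] cnt_le[OF S, of "Suc (Suc 0)"]
      by simp
    moreover have "dominates r s S" unfolding dominates_def
    proof
      fix v assume "v \<in> lex_verts r s"
      obtain u where u: "u \<in> S" "fst u = Suc (fst v) mod r"
        using cnt_posE[OF True[rule_format, of "Suc (fst v)"]] by blast
      then have "lex_adj r v u" unfolding lex_adj_def by simp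
      then show "\<exists>u\<in>S. lex_adj r v u" using u by blast
    qed
    ultimately show ?thesis by blast
  next
    case False
    then obtain j0 where j0: "cnt S r j0 = 0" by auto
    have no3: False if h: "cnt S r j > 0" "cnt S r (Suc j) > 0" "cnt S r (Suc (Suc j)) > 0" for j
    proof -
      have all: "cnt S r (j + k) > 0 \<and> cnt S r (Suc (j + k)) > 0 \<and> cnt S r (Suc (Suc (j + k))) > 0" for k
      proof (induction k)
        case 0 then show ?case using h by simp
      next
        case (Suc k)
        have e1: "cnt S r (j + k) + cnt S r (Suc (j + k)) + cnt S r (Suc (Suc (j + k))) = d + 1"
          using E Suc.IH by blast
        have e2: "cnt S r (Suc (j + k)) + cnt S r (Suc (Suc (j + k))) + cnt S r (Suc (Suc (Suc (j + k)))) = d + 1"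
          using E Suc.IH by blast
        show ?case using e1 e2 Suc.IH by simp
      qed
      have "j + (j0 + r * j - j) = j0 + r * j" using r0
        by (simp add: add.commute le_add2 trans_le_add2)
      moreover have "cnt S r (j0 + r * j) = cnt S r j0" by (rule cnt_cong) simp
      ultimately have "cnt S r (j + (j0 + r * j - j)) = cnt S r j0" by simp
      then show False using all[of "j0 + r * j - j"] j0 by simp
    qed
    obtain x where x: "x \<in> S" using con unfolding induced_connected_def by blast
    define i where "i = fst x"
    have ilt: "i < r" using lt[OF x] unfolding i_def .
    have ci: "cnt S r i > 0" using cnt_pos[OF S x] ilt unfolding i_def by simp
    define m where "m = (if cnt S r (Suc i) > 0 then i else i + r - 1)"
    have M: "cnt S r (Suc m) > 0 \<and> (cnt S r m > 0 \<or> cnt S r (Suc (Suc m)) = 0)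
       \<and> (fst x = m mod r \<or> fst x = Suc m mod r)"
    proof (cases "cnt S r (Suc i) > 0")
      case True then show ?thesis unfolding m_def using ci ilt i_def by simp
    next
      case False
      have sm: "Suc m = i + r" unfolding m_def using False r0 by simp
      have "cnt S r (Suc m) = cnt S r i" unfolding sm by (rule cnt_cong) simp
      moreover have "cnt S r (Suc (Suc m)) = cnt S r (Suc i)" unfolding sm
        by (rule cnt_cong) (simp only: add_Suc[symmetric] mod_add_self2)
      moreover have "Suc m mod r = fst x" unfolding sm using ilt i_def by simp
      ultimately show ?thesis using ci False by simp
    qed
    define Inv where "Inv y \<longleftrightarrow> fst y = m mod r \<or> fst y = Suc m mod r" for y :: "nat \<times> nat"
    have stepI: "Inv z" if y: "y \<in> S" and z: "z \<in> S" and iy: "Inv y" and a: "lex_adj r y z" for y z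
    proof -
      have cz: "cnt S r (fst z) > 0" using cnt_pos[OF S z] lt[OF z] by simp
      have ms: "Suc (m mod r) mod r = Suc m mod r" by (rule mod_Suc_eq)
      consider (a1) "fst z = Suc (fst y) mod r" | (a2) "fst y = Suc (fst z) mod r"
        | (a3) "fst y = fst z" using a unfolding lex_adj_def by blast
      then show ?thesis
      proof cases
        case a1
        show ?thesis
        proof (cases "fst y = m mod r")
          case True then show ?thesis using a1 ms unfolding Inv_def by simp
        next
          case F: False
          then have fy: "fst y = Suc m mod r" using iy unfolding Inv_def by simp
          have "fst z = Suc (Suc m) mod r" using a1 fy by (metis mod_Suc_eq)
          then have "cnt S r (Suc (Suc m)) > 0" using cnt_pos[OF S z] by simp
          then show ?thesis using M no3[of m] by auto
        qed
      next
        case a2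
        define q where "q = fst z"
        have cq: "cnt S r q > 0" using cz unfolding q_def .
        have qr: "q < r" using lt[OF z] unfolding q_def .
        show ?thesis
        proof (cases "fst y = m mod r")
          case True
          then have e: "Suc q mod r = m mod r" using a2 unfolding q_def by simp
          have "cnt S r (Suc q) = cnt S r m" using e by (rule cnt_cong)
          moreover have "Suc (Suc q) mod r = Suc m mod r" using e suc_mod_cancel by (metis mod_mod_trivial)
          then have "cnt S r (Suc (Suc q)) = cnt S r (Suc m)" by (rule cnt_cong)
          moreover have "cnt S r m > 0" using cnt_pos[OF S y] True by simp
          ultimately show ?thesis using M no3[of q] cq by auto
        next
          case F: False
          then have fy: "fst y = Suc m mod r" using iy unfolding Inv_def by simp
          then have "Suc q mod r = Suc m mod r" using a2 unfolding q_def by simp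
          then have "q mod r = m mod r" using suc_mod_cancel by blast
          then show ?thesis using qr unfolding Inv_def q_def by simp
        qed
      next
        case a3 then show ?thesis using iy unfolding Inv_def by simp
      qed
    qed
    have allInv: "Inv y" if y: "y \<in> S" for y
    proof -
      have "(\<lambda>u v. u \<in> S \<and> v \<in> S \<and> lex_adj r u v)\<^sup>*\<^sup>* x y"
        using con x y unfolding induced_connected_def by blast
      then show ?thesis
      proof (induction rule: rtranclp_induct)
        case base then show ?case using M unfolding Inv_def by simp
      next
        case (step y z)
        then have h: "y \<in> S" "z \<in> S" "lex_adj r y z" "Inv y" by auto
        show ?case by (rule stepI[OF h(1) h(2) h(4) h(3)])
      qed
    qed
    have clq: "is_clique r S" unfolding is_clique_def
    proof (intro ballI impI)
      fix y z assume y: "y \<in> S" and z: "z \<in> S" and ne: "y \<noteq> z"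
      have ms: "Suc (m mod r) mod r = Suc m mod r" by (rule mod_Suc_eq)
      have d1: "m mod r \<noteq> Suc m mod r" using mod_ne1[OF r2] .
      show "lex_adj r y z"
      proof (cases "fst y = fst z")
        case True
        then have "snd y \<noteq> snd z" using ne by (simp add: prod_eq_iff)
        then show ?thesis using True unfolding lex_adj_def by simp
      next
        case False
        then have "(fst y = m mod r \<and> fst z = Suc m mod r) \<or> (fst z = m mod r \<and> fst y = Suc m mod r)"
          using allInv[OF y] allInv[OF z] unfolding Inv_def by auto
        then show ?thesis unfolding lex_adj_def using ms by auto
      qed
    qed
    have cf: "induced_regular r S (card S - 1)"
      using clique_facts[OF r2 S _ clq] x by blast
    have "card {y\<in>S. lex_adj r x y} = d" using reg x unfolding induced_regular_def by blast
    moreover have "card {y\<in>S. lex_adj r x y} = card S - 1" using cf x unfolding induced_regular_def by blast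
    moreover have "card S > 0" using fin x card_gt_0_iff by blast
    ultimately have cS: "card S = d + 1" by simp
    have sub: "S \<subseteq> {m mod r, Suc m mod r} \<times> {0..<s}"
    proof
      fix y assume y: "y \<in> S"
      then have "Inv y" by (rule allInv)
      moreover have "snd y < s" using S y unfolding lex_verts_def by auto
      ultimately show "y \<in> {m mod r, Suc m mod r} \<times> {0..<s}" unfolding Inv_def by (cases y) auto
    qed
    have c2: "card {m mod r, Suc m mod r} \<le> 2" by (cases "m mod r = Suc m mod r") simp_all
    have "card S \<le> card ({m mod r, Suc m mod r} \<times> {0..<s})"
      using sub by (rule card_mono[rotated]) simp
    also have "\<dots> = card {m mod r, Suc m mod r} * s" by (simp add: card_cartesian_product)
    also have "\<dots> \<le> 2 * s" using c2 by simp
    finally show ?thesis using clq cS by simp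
  qed
qed



lemma conv1:
  assumes r: "r \<ge> 4" and s: "s \<ge> 1" and d: "d + 1 \<le> 2 * s"
  shows "\<exists>S. S \<subseteq> lex_verts r s \<and> induced_connected r S \<and> induced_regular r S d \<and>
                 is_clique r S \<and> card S = d + 1"
proof -
  define S where "S = {0::nat} \<times> {0..<min s (d+1)} \<union> {1} \<times> {0..<d+1-s}"
  have sub: "S \<subseteq> lex_verts r s" unfolding S_def lex_verts_def using r d by auto
  have "card S = card ({0::nat} \<times> {0..<min s (d+1)}) + card ({1::nat} \<times> {0..<d+1-s})"
    unfolding S_def by (rule card_Un_disjoint) auto
  then have cS: "card S = d + 1" by simp
  have ne: "S \<noteq> {}" unfolding S_def using s by auto
  have m1: "Suc 0 mod r = 1" using r by simp
  have clq: "is_clique r S" unfolding is_clique_def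
  proof (intro ballI impI)
    fix x y assume x: "x \<in> S" and y: "y \<in> S" and ne: "x \<noteq> y"
    show "lex_adj r x y"
    proof (cases "fst x = fst y")
      case True
      then have "snd x \<noteq> snd y" using ne by (simp add: prod_eq_iff)
      then show ?thesis using True unfolding lex_adj_def by simp
    next
      case False
      have "fst x \<in> {0,1}" "fst y \<in> {0,1}" using x y unfolding S_def by auto
      then show ?thesis using False m1 unfolding lex_adj_def by auto
    qed
  qed
  have "induced_connected r S \<and> induced_regular r S (card S - 1)"
    using clique_facts[OF _ sub ne clq] r by simp
  then show ?thesis using sub clq cS by auto
qed

lemma three_dvd: "\<not> 3 dvd (r::nat) \<Longrightarrow> 3 dvd r * e \<Longrightarrow> 3 dvd e"
proof -
  assume a: "\<not> 3 dvd r" "3 dvd r * e"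
  have h: "(r mod 3) * (e mod 3) mod 3 = 0" using a(2) by (simp add: mod_mult_eq dvd_eq_mod_eq_0)
  have "r mod 3 = 1 \<or> r mod 3 = 2" using a(1) by arith
  moreover have "e mod 3 = 0 \<or> e mod 3 = 1 \<or> e mod 3 = 2" by arith
  ultimately have "e mod 3 = 0" using h by auto
  then show ?thesis by (simp add: dvd_eq_mod_eq_0)
qed

lemma herm: "(n::nat) div 3 + (n + 1) div 3 + (n + 2) div 3 = n"
proof -
  define q t where "q = n div 3" and "t = n mod 3"
  have k: "(3 * q + k) div 3 = q + k div 3" for k by simp
  have n: "n = 3 * q + t" unfolding q_def t_def by simp
  have a1: "n div 3 = q + t div 3" using k[of t] n by metis
  have a2: "(n + 1) div 3 = q + (t + 1) div 3" using k[of "t+1"] n by (metis add.assoc)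
  have a3: "(n + 2) div 3 = q + (t + 2) div 3" using k[of "t+2"] n by (metis add.assoc)
  have "t = 0 \<or> t = 1 \<or> t = 2" unfolding t_def by arith
  then show ?thesis unfolding a1 a2 a3 using n by auto
qed
lemma gs: "(d + 1 + j mod 3) div 3 + (d + 1 + Suc j mod 3) div 3 + (d + 1 + Suc (Suc j) mod 3) div 3 = (d::nat) + 1"
proof -
  have e1: "Suc j mod 3 = Suc (j mod 3) mod 3" by (simp add: mod_Suc_eq)
  have e2: "Suc (Suc j) mod 3 = Suc (Suc (j mod 3)) mod 3" by (simp add: mod_Suc_Suc_eq)
  have "j mod 3 = 0 \<or> j mod 3 = 1 \<or> j mod 3 = 2" by arith
  then show ?thesis unfolding e1 e2 using herm[of "d+1"] by (elim disjE) (simp_all add: add.commute add.left_commute)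
qed

lemma conv2:
  assumes r: "r \<ge> 4" and d: "2 \<le> d" "d + 1 \<le> 3 * s" and dv: "3 dvd r * (d + 1)"
  shows "\<exists>S. S \<subseteq> lex_verts r s \<and> induced_connected r S \<and> induced_regular r S d \<and>
                 card S = r * (d + 1) div 3 \<and> dominates r s S"
proof -
  have r3: "r \<ge> 3" and r0: "r > 0" using r by auto
  define g where "g j = (if 3 dvd r then (d + 1 + j mod 3) div 3 else (d + 1) div 3)" for j
  have gsum: "g j + g (Suc j) + g (Suc (Suc j)) = d + 1" for j
  proof (cases "3 dvd r")
    case True
    have "(d + 1 + j mod 3) div 3 + (d + 1 + Suc j mod 3) div 3 + (d + 1 + Suc (Suc j) mod 3) div 3 = d + 1"
      by (rule gs)
    then show ?thesis unfolding g_def using True by simp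
  next
    case False
    then have "3 dvd d + 1" using three_dvd dv by blast
    then show ?thesis unfolding g_def using False by auto
  qed
  have gpos: "g j \<ge> 1" for j unfolding g_def using d by auto
  have gle: "g j \<le> s" for j unfolding g_def using d by auto
  have gmod: "g (j mod r) = g j" for j unfolding g_def by (auto simp: mod_mod_cancel)
  define S where "S = {(i, k). i < r \<and> k < g i}"
  have sub: "S \<subseteq> lex_verts r s" unfolding S_def lex_verts_def by (auto intro: order.strict_trans2[OF _ gle])
  have cntS: "cnt S r j = g j" for j
  proof -
    have "{y\<in>S. fst y = j mod r} = {j mod r} \<times> {0..<g (j mod r)}" unfolding S_def using r0 by auto
    then show ?thesis unfolding cnt_def using gmod by simp
  qed
  have T: "cnt S r j + cnt S r (Suc j) + cnt S r (Suc (Suc j)) = d + 1" for j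
    unfolding cntS by (rule gsum)
  have eq3: "3 * card S = r * (d + 1)" by (rule triple[OF r0 sub T])
  have reg: "induced_regular r S d" unfolding induced_regular_def
  proof
    fix x assume x: "x \<in> S"
    have ilt: "fst x < r" using x unfolding S_def by auto
    have "fst x = Suc (fst x + r - 1) mod r" using ilt r0 by simp
    from nbr_card[OF r3 sub x this] T[of "fst x + r - 1"]
    show "card {y\<in>S. lex_adj r x y} = d" by simp
  qed
  have dom: "dominates r s S" unfolding dominates_def
  proof
    fix v assume "v \<in> lex_verts r s"
    have "(Suc (fst v) mod r, 0) \<in> S" unfolding S_def using r0 gpos[of "Suc (fst v) mod r"] by auto
    moreover have "lex_adj r v (Suc (fst v) mod r, 0)" unfolding lex_adj_def by simp
    ultimately show "\<exists>u\<in>S. lex_adj r v u" by blast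
  qed
  define R where "R u v \<longleftrightarrow> u \<in> S \<and> v \<in> S \<and> lex_adj r u v" for u v
  have Rsym: "R u v \<Longrightarrow> R v u" for u v unfolding R_def using adj_sym by blast
  have in0: "i < r \<Longrightarrow> (i, 0) \<in> S" for i unfolding S_def using gpos[of i] by auto
  have path: "i < r \<Longrightarrow> R\<^sup>*\<^sup>* (0, 0) (i, 0)" for i
  proof (induction i)
    case 0 then show ?case by simp
  next
    case (Suc i)
    have "R (i, 0) (Suc i, 0)" unfolding R_def lex_adj_def using Suc.prems in0 by simp
    then show ?case using Suc by (meson Suc_lessD rtranclp.rtrancl_into_rtrancl)
  qed
  have to: "R\<^sup>*\<^sup>* (0, 0) x" if x: "x \<in> S" for x
  proof -
    obtain i k where ik: "x = (i, k)" by (cases x)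
    have ir: "i < r" using x ik unfolding S_def by auto
    show ?thesis
    proof (cases "k = 0")
      case True then show ?thesis using path[OF ir] ik by simp
    next
      case False
      have "R (i, 0) (i, k)" unfolding R_def lex_adj_def using in0[OF ir] x ik False by simp
      then show ?thesis using path[OF ir] ik by (meson rtranclp.rtrancl_into_rtrancl)
    qed
  qed
  have con: "induced_connected r S" unfolding induced_connected_def
  proof (intro conjI ballI)
    show "S \<noteq> {}" using in0[OF r0] by blast
    fix x y assume x: "x \<in> S" and y: "y \<in> S"
    have "R\<^sup>*\<^sup>* x (0, 0)" using rtranclp_sym[of R, OF Rsym to[OF x]] by blast
    moreover have "R\<^sup>*\<^sup>* (0, 0) y" using to[OF y] .
    ultimately
    have "R\<^sup>*\<^sup>* x y" by (rule rtranclp_trans)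
    then show "(\<lambda>u v. u \<in> S \<and> v \<in> S \<and> lex_adj r u v)\<^sup>*\<^sup>* x y" unfolding R_def .
  qed
  show ?thesis using sub con reg dom eq3 by auto
qed


theorem lemma6:
  fixes r s :: nat
  assumes "r \<ge> 4" and "s \<ge> 1"
  shows "(\<forall>S d. S \<subseteq> lex_verts r s \<and> induced_connected r S \<and> induced_regular r S d \<longrightarrow>
            (is_clique r S \<and> card S = d + 1 \<and> d + 1 \<le> 2 * s)
          \<or> (3 dvd r * (d + 1) \<and> 2 \<le> d \<and> d + 1 \<le> 3 * s \<and>
             card S = r * (d + 1) div 3 \<and> dominates r s S))
      \<and> (\<forall>d. d + 1 \<le> 2 * s \<longrightarrow>
            (\<exists>S. S \<subseteq> lex_verts r s \<and> induced_connected r S \<and> induced_regular r S d \<and>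
                 is_clique r S \<and> card S = d + 1))
      \<and> (\<forall>d. 2 \<le> d \<and> d + 1 \<le> 3 * s \<and> 3 dvd r * (d + 1) \<longrightarrow>
            (\<exists>S. S \<subseteq> lex_verts r s \<and> induced_connected r S \<and> induced_regular r S d \<and>
                 card S = r * (d + 1) div 3 \<and> dominates r s S))"
proof (intro conjI allI impI)
  fix S d
  assume h: "S \<subseteq> lex_verts r s \<and> induced_connected r S \<and> induced_regular r S d"
  show "(is_clique r S \<and> card S = d + 1 \<and> d + 1 \<le> 2 * s)
          \<or> (3 dvd r * (d + 1) \<and> 2 \<le> d \<and> d + 1 \<le> 3 * s \<and>
             card S = r * (d + 1) div 3 \<and> dominates r s S)"
    using h by (intro forward[OF assms(1)]) simp_all
next
  fix d :: nat assume "d + 1 \<le> 2 * s"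
  then show "\<exists>S. S \<subseteq> lex_verts r s \<and> induced_connected r S \<and> induced_regular r S d \<and>
                 is_clique r S \<and> card S = d + 1" by (rule conv1[OF assms])
next
  fix d :: nat assume h: "2 \<le> d \<and> d + 1 \<le> 3 * s \<and> 3 dvd r * (d + 1)"
  show "\<exists>S. S \<subseteq> lex_verts r s \<and> induced_connected r S \<and> induced_regular r S d \<and>
                 card S = r * (d + 1) div 3 \<and> dominates r s S"
    using h by (intro conv2[OF assms(1)]) simp_all
qed

end
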